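(* Let $k\ge1$, and let $n$ be a power of $2$ with $n>2^{k+7}$. There is a deterministic oblivious parallel algorithm that, given any array $A$ of $n$ elements each with a $k$-bit key such that $A$ is $(1-2^{-8k})$-uniform, outputs the dominant key of $A$; the algorithm uses $O(n)$ total work and $O(k+\log n)$ depth.
   Context: For $\epsilon\in(0,1/2)$, an array $A$ of length $n$ is $(1-\epsilon)$-uniform if all but at most $\epsilon n$ of its elements have the same key; this key is called the dominant key. (On inputs that are not uniform the output may be arbitrary.) A deterministic oblivious parallel algorithm is a PRAM algorithm whose memory access patterns are fixed in advance and depend only on the input length; total work is the total number of word operations, depth the number of parallel steps, with unit-cost operations on $O(\log n)$-bit words. *)

theory Defs
  imports Main
begin

text \<open>A model of deterministic oblivious (CREW) PRAM algorithms on w-bit words.  Every address read or written is fixed in the program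
  text, so the memory access pattern depends only on the program (i.e. on
  the input length), never on the data: the algorithm is oblivious.\<close>

datatype wop =
    WConst nat | WAdd | WSub | WMul | WDiv | WMod
  | WAnd | WOr | WXor | WShl | WShr | WLess | WEq | WSelect

record instr =
  dst :: nat
  opr :: wop
  src1 :: nat
  src2 :: nat
  src3 :: nat

type_synonym step = "instr list"
type_synonym program = "step list"
type_synonym memory = "nat \<Rightarrow> nat"

fun eval_op :: "nat \<Rightarrow> wop \<Rightarrow> nat \<Rightarrow> nat \<Rightarrow> nat \<Rightarrow> nat" where
  "eval_op w (WConst c) x y z = c mod 2 ^ w"
| "eval_op w WAdd x y z = (x + y) mod 2 ^ w"
| "eval_op w WSub x y z = (x + 2 ^ w - y mod 2 ^ w) mod 2 ^ w"
| "eval_op w WMul x y z = (x * y) mod 2 ^ w"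
| "eval_op w WDiv x y z = (x div y) mod 2 ^ w"
| "eval_op w WMod x y z = (x mod y) mod 2 ^ w"
| "eval_op w WAnd x y z = (and x y) mod 2 ^ w"
| "eval_op w WOr x y z = (or x y) mod 2 ^ w"
| "eval_op w WXor x y z = (xor x y) mod 2 ^ w"
| "eval_op w WShl x y z = (x * 2 ^ y) mod 2 ^ w"
| "eval_op w WShr x y z = (x div 2 ^ y) mod 2 ^ w"
| "eval_op w WLess x y z = (if x < y then 1 else 0)"
| "eval_op w WEq x y z = (if x = y then 1 else 0)"
| "eval_op w WSelect x y z = (if x \<noteq> 0 then y else z) mod 2 ^ w"

definition exec_instr :: "nat \<Rightarrow> memory \<Rightarrow> instr \<Rightarrow> memory \<Rightarrow> memory" where
  "exec_instr w M i M' =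
     M'(dst i := eval_op w (opr i) (M (src1 i)) (M (src2 i)) (M (src3 i)))"

text \<open>A parallel step: all instructions read the old memory M.\<close>
definition exec_step :: "nat \<Rightarrow> step \<Rightarrow> memory \<Rightarrow> memory" where
  "exec_step w s M = fold (exec_instr w M) s M"

definition run :: "nat \<Rightarrow> program \<Rightarrow> memory \<Rightarrow> memory" where
  "run w P M = fold (exec_step w) P M"

text \<open>Exclusive write: instructions of one step write distinct cells.\<close>
definition wf_program :: "program \<Rightarrow> bool" where
  "wf_program P \<longleftrightarrow> (\<forall>s\<in>set P. distinct (map dst s))"

definition work :: "program \<Rightarrow> nat" where
  "work P = sum_list (map length P)"

definition depth :: "program \<Rightarrow> nat" where
  "depth P = length P"

definition init_mem :: "nat list \<Rightarrow> memory" where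
  "init_mem A = (\<lambda>a. if a < length A then A ! a else 0)"

text \<open>A is (1-eps)-uniform with dominant key d, eps = 1/2^e:
  at most eps*n entries differ from d.\<close>
definition uniform_dom :: "nat \<Rightarrow> nat list \<Rightarrow> nat \<Rightarrow> bool" where
  "uniform_dom e A d \<longleftrightarrow> card {i. i < length A \<and> A ! i \<noteq> d} * 2 ^ e \<le> length A"

end

theory Submission
  imports Defs
begin

definition halve :: "nat \<Rightarrow> step" where
  "halve h = map (\<lambda>i. \<lparr>dst = i, opr = WAdd, src1 = i, src2 = i + h, src3 = 0\<rparr>) [0..<h]"

fun halvs :: "nat \<Rightarrow> program" where
  "halvs 0 = []"
| "halvs (Suc j) = halve (2^j) # halvs j"

definition fin :: "nat \<Rightarrow> program" where
  "fin m = [[\<lparr>dst = 2^m, opr = WConst (2^(m-1)), src1 = 0, src2 = 0, src3 = 0\<rparr>,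
             \<lparr>dst = 2^m+1, opr = WConst m, src1 = 0, src2 = 0, src3 = 0\<rparr>],
            [\<lparr>dst = 0, opr = WAdd, src1 = 0, src2 = 2^m, src3 = 0\<rparr>],
            [\<lparr>dst = 0, opr = WShr, src1 = 0, src2 = 2^m+1, src3 = 0\<rparr>]]"

lemma fold_map_dst:
  assumes "\<And>i. dst (f i) = i"
  shows "fold (exec_instr w M) (map f xs) M0 a =
     (if a \<in> set xs then eval_op w (opr (f a)) (M (src1 (f a))) (M (src2 (f a))) (M (src3 (f a))) else M0 a)"
  using assms by (induction xs arbitrary: M0) (auto simp: exec_instr_def)

lemma exec_halve:
  "exec_step w (halve h) M a = (if a < h then (M a + M (a + h)) mod 2^w else M a)"
  unfolding exec_step_def halve_def by (subst fold_map_dst) auto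

lemma sum_split2: "(\<Sum>i<2*h. (M::nat\<Rightarrow>nat) i) = (\<Sum>i<h. M i + M (i + h))"
proof -
  have g: "(\<Sum>i<h+j. M i) = (\<Sum>i<h. M i) + (\<Sum>i<j. M (i + h))" for j
    by (induction j) (auto simp: add.commute)
  have "(\<Sum>i<2*h. M i) = (\<Sum>i<h. M i) + (\<Sum>i<h. M (i + h))"
    using g[of h] by (simp add: mult_2)
  thus ?thesis by (simp add: sum.distrib)
qed

lemma halve_step:
  assumes "(\<Sum>i<2*h. M i) = S" "S < 2^w"
  shows "(\<Sum>i<h. exec_step w (halve h) M i) = S"
proof -
  have le: "M i + M (i + h) \<le> S" if "i < h" for i
  proof -
    have "M i + M (i + h) \<le> (\<Sum>j<h. M j + M (j + h))"
      using that by (intro member_le_sum) auto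
    thus ?thesis using assms(1) sum_split2 by metis
  qed
  have "(\<Sum>i<h. exec_step w (halve h) M i) = (\<Sum>i<h. M i + M (i + h))"
    using le assms(2) by (intro sum.cong) (auto simp: exec_halve intro!: mod_less order.strict_trans1[OF le])
  thus ?thesis using assms(1) sum_split2 by metis
qed

lemma run_halvs:
  assumes "(\<Sum>i<2^j. M i) = S" "S < 2^w"
  shows "run w (halvs j) M 0 = S"
  using assms
proof (induction j arbitrary: M)
  case 0
  then show ?case by (simp add: run_def)
next
  case (Suc j)
  have "(\<Sum>i<2^j. exec_step w (halve (2^j)) M i) = S"
    using Suc.prems by (intro halve_step) (auto simp: mult.commute)
  hence "run w (halvs j) (exec_step w (halve (2^j)) M) 0 = S"
    using Suc by blast
  thus ?case by (simp add: run_def)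
qed

lemma work_halvs: "work (halvs j) + 1 = 2^j"
  by (induction j) (auto simp: work_def halve_def)

lemma wf_halvs: "wf_program (halvs j)"
  by (induction j) (auto simp: wf_program_def halve_def comp_def)



lemma run_fin: "run w (fin m) M 0 = ((M 0 + 2^(m-1) mod 2^w) mod 2^w div 2^(m mod 2^w)) mod 2^w"
  by (simp add: run_def fin_def exec_step_def exec_instr_def)

lemma sum_init: "(\<Sum>i<length A. init_mem A i) = sum_list A"
  by (simp add: init_mem_def sum_list_sum_nth atLeast0LessThan)

lemma keymath:
  fixes A :: "nat list" and k m d :: nat
  assumes k: "k \<ge> 1" and len: "length A = 2^m" and m: "m \<ge> 1"
    and bnd: "\<forall>x\<in>set A. x < 2^k" and u: "uniform_dom (8*k) A d"
  shows "(sum_list A + 2^(m-1)) div 2^m = d \<and> sum_list A \<le> 2^m * 2^k"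
proof -
  define n where "n = (2::nat)^m"
  define h where "h = (2::nat)^(m-1)"
  have nh: "n = 2*h" using m unfolding n_def h_def
    by (metis Suc_diff_1 less_le_trans not_less_eq_eq power_Suc zero_less_one)
  define B where "B = {i. i < length A \<and> A ! i \<noteq> d}"
  define G where "G = {i. i < length A \<and> A ! i = d}"
  define b where "b = card B"
  have fB: "finite B" unfolding B_def by auto
  have ub: "b * 2^(8*k) \<le> n" using u unfolding uniform_dom_def b_def B_def n_def len by simp
  have npos: "n > 0" unfolding n_def by simp
  have dlt: "d < 2^k"
  proof (rule ccontr)
    assume "\<not> d < 2^k"
    hence "B = {..<length A}" unfolding B_def using bnd nth_mem by fastforce
    hence "b = n" unfolding b_def n_def using len by simp
    moreover have "(2::nat)^(8*k) > 1" using k by (intro one_less_power) auto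
    ultimately show False using ub npos by (metis le_less_trans less_irrefl mult_less_cancel1 nat_mult_1_right)
  qed
  have "(2::nat)^(k+2) \<le> 2^(8*k)" using k by (intro power_increasing) auto
  hence "b * 2^(k+2) \<le> n" using ub by (meson le_trans mult_le_mono2)
  hence b4: "4 * (b * 2^k) \<le> n" by (simp add: power_add mult_ac)
  have bd: "b * d \<le> b * 2^k" using dlt by simp
  have UG: "{0..<length A} = B \<union> G" "B \<inter> G = {}" unfolding B_def G_def by auto
  have fG: "finite G" unfolding G_def by auto
  have S: "sum_list A = (\<Sum>i\<in>B. A!i) + (\<Sum>i\<in>G. A!i)"
    unfolding sum_list_sum_nth UG(1) using sum.union_disjoint[OF fB fG UG(2)] by simp
  have SG: "(\<Sum>i\<in>G. A!i) = card G * d" unfolding G_def by simp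
  have cardG: "card G + b = n"
    using card_Un_disjoint[OF fB fG UG(2)] UG(1) len unfolding b_def n_def by (metis add.commute card_atLeastLessThan diff_zero)
  have TB: "(\<Sum>i\<in>B. A!i) \<le> b * 2^k"
  proof -
    have "(\<Sum>i\<in>B. A!i) \<le> (\<Sum>i\<in>B. 2^k)"
      using bnd by (intro sum_mono) (auto simp: B_def intro: less_imp_le)
    thus ?thesis unfolding b_def by simp
  qed
  have nd: "n * d = card G * d + b * d" using cardG by (metis add_mult_distrib)
  have lo: "d * n \<le> sum_list A + h" proof -
    have "d * n = card G * d + b * d" using nd by (simp add: mult.commute)
    thus ?thesis using S SG bd b4 nh by linarith
  qed
  have hi: "sum_list A + h < (d+1) * n" proof -
    have "(d+1) * n = card G * d + b * d + n" using nd by (simp add: algebra_simps)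
    thus ?thesis using S SG TB b4 nh npos by linarith
  qed
  have "(sum_list A + h) div n = d"
    using lo hi by (intro div_nat_eqI) (auto simp: mult.commute)
  moreover have "sum_list A \<le> n * 2^k" proof -
    have "card G * d \<le> card G * 2^k" using dlt by simp
    moreover have "n * 2^k = card G * 2^k + b * 2^k" using cardG by (metis add_mult_distrib)
    ultimately show ?thesis using S SG TB by linarith
  qed
  ultimately show ?thesis unfolding n_def h_def by simp
qed

lemma run_append: "run w (P @ Q) M = run w Q (run w P M)"
  by (simp add: run_def)

theorem mainTheorem7:
  shows "\<exists>(C::nat) (c::nat). \<forall>k m. k \<ge> 1 \<longrightarrow> 2 ^ m > (2::nat) ^ (k + 7) \<longrightarrow>
    (\<exists>P. wf_program P
       \<and> work P \<le> C * 2 ^ m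
       \<and> depth P \<le> C * (k + m)
       \<and> (\<forall>A d. length A = 2 ^ m \<longrightarrow> (\<forall>x\<in>set A. x < 2 ^ k) \<longrightarrow>
              uniform_dom (8 * k) A d \<longrightarrow>
              run (c * m) P (init_mem A) 0 = d))"
proof (rule exI[where x=4], rule exI[where x=2], intro allI impI)
  fix k m :: nat
  assume k: "k \<ge> 1" and mm: "2 ^ m > (2::nat) ^ (k + 7)"
  let ?P = "halvs m @ fin m"
  show "\<exists>P. wf_program P
       \<and> work P \<le> 4 * 2 ^ m
       \<and> depth P \<le> 4 * (k + m)
       \<and> (\<forall>A d. length A = 2 ^ m \<longrightarrow> (\<forall>x\<in>set A. x < 2 ^ k) \<longrightarrow>
              uniform_dom (8 * k) A d \<longrightarrow>
              run (2 * m) P (init_mem A) 0 = d)"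
  proof (rule exI[where x="?P"], intro conjI allI impI)
  have mk: "k + 7 < m" using mm by (metis power_less_imp_less_exp one_less_numeral_iff semiring_norm(76))
  show "wf_program ?P" using wf_halvs[of m] by (auto simp: wf_program_def fin_def)
  have "work ?P = work (halvs m) + 4" by (simp add: work_def fin_def)
  thus "work ?P \<le> 4 * 2^m" using work_halvs[of m] by simp
  have "depth ?P = m + 3"
  proof -
    have "length (halvs m) = m" by (induction m) auto
    thus ?thesis by (simp add: depth_def fin_def)
  qed
  thus "depth ?P \<le> 4 * (k + m)" using mk by simp
  fix A d
  assume len: "length A = 2^m" and bnd: "\<forall>x\<in>set A. x < 2^k" and u: "uniform_dom (8*k) A d"
  define S where "S = sum_list A"
  define w where "w = 2 * m"
  have m1: "m \<ge> 1" using mk by simp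
  from keymath[OF k len m1 bnd u] have ds: "(S + 2^(m-1)) div 2^m = d" and Sb: "S \<le> 2^m * 2^k"
    unfolding S_def by auto
  have "(2::nat)^m * 2^k + 2^(m-1) \<le> 2^(m+k+1)"
  proof -
    have "(2::nat)^(m-1) \<le> 2^(m+k)" by (intro power_increasing) auto
    thus ?thesis by (simp add: power_add mult.commute)
  qed
  moreover have "(2::nat)^(m+k+1) \<le> 2^w" unfolding w_def using mk by (intro power_increasing) auto
  have "S + 2^(m-1) < 2^w"
  proof -
    have "(2::nat)^(m+k+1) < 2^w" unfolding w_def using mk by (intro power_strict_increasing) auto
    thus ?thesis using Sb \<open>(2::nat)^m * 2^k + 2^(m-1) \<le> 2^(m+k+1)\<close> by linarith
  qed
  hence Sw: "S + 2^(m-1) < 2^w" .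
  hence S2: "S < 2^w" by simp
  have "(\<Sum>i<2^m. init_mem A i) = S" using sum_init[of A] len S_def by simp
  hence R: "run w (halvs m) (init_mem A) 0 = S" using run_halvs S2 by blast
  have h1: "2^(m-1) mod 2^w = (2::nat)^(m-1)" using Sw by (intro mod_less) linarith
  have h2: "m mod 2^w = m"
  proof -
    have "m < 2^m" by simp
    also have "(2::nat)^m \<le> 2^w" unfolding w_def by (intro power_increasing) auto
    finally show ?thesis by simp
  qed
  have h3: "d < 2^w" using ds Sw by (metis div_le_dividend le_less_trans)
  show "run (2 * m) ?P (init_mem A) 0 = d"
    unfolding w_def[symmetric] run_append run_fin R h1 h2
    using Sw ds h3 by simp
  qed
qed

end
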